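(* For every prime $p$ and every integer $\tau$ there exists $\alpha^\tau_p\in\mathbb Z[z^2]$, $z=q-q^{-1}$, such that $$\sum_{j=0}^{p-1}(q^{p\tau})^{p-1-2j}-p\,(-1)^{(p-1)\tau}=[p]^2\,\alpha^\tau_p,\qquad [p]=\frac{q^p-q^{-p}}{q-q^{-1}}.$$ *)

theory Defs
  imports Complex_Main "HOL-Computational_Algebra.Polynomial" "HOL-Computational_Algebra.Primes"
begin

definition qint :: "int \<Rightarrow> real \<Rightarrow> real" where
  "qint n q = (q powi n - q powi (-n)) / (q - inverse q)"

end

theory Submission imports Defs begin

abbreviation R :: "int poly \<Rightarrow> real poly" where "R \<equiv> map_poly of_int"

lemma R_add: "R (p + q) = R p + R q" by (rule poly_eqI) (simp add: coeff_map_poly)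
lemma R_diff: "R (p - q) = R p - R q" by (rule poly_eqI) (simp add: coeff_map_poly)
lemma R_pCons: "R (pCons a p) = pCons (of_int a) (R p)" by (simp add: map_poly_pCons)
lemma R_smult: "R (smult a p) = smult (of_int a) (R p)" by (rule poly_eqI) (simp add: coeff_map_poly)
lemma R_mult: "R (p * q) = R p * R q"
  by (induction p) (simp_all add: R_add R_pCons R_smult)
lemma R_pcompose: "R (pcompose p r) = pcompose (R p) (R r)"
  by (induction p) (simp_all add: pcompose_pCons R_add R_pCons R_mult)
lemma R_sum: "R (sum f A) = (\<Sum>k\<in>A. R (f k))"
  by (induction A rule: infinite_finite_induct) (simp_all add: R_add)

fun c :: "nat \<Rightarrow> int poly" where
  "c 0 = [:2:]" | "c (Suc 0) = [:2,1:]" | "c (Suc (Suc n)) = [:2,1:] * c (Suc n) - c n"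

definition z2 :: "real \<Rightarrow> real" where "z2 q = (q - inverse q)^2"

lemma c_eval: "q \<noteq> 0 \<Longrightarrow> q^(2*n) + inverse (q^(2*n)) = poly (R (c n)) (z2 q)"
proof (induction n rule: c.induct)
  case 1 then show ?case by (simp add: R_pCons)
next
  case 2 then show ?case by (simp add: R_pCons z2_def field_simps power2_eq_square)
next
  case (3 n)
  define a where "a = q^(2*n)"
  define s where "s = q^2"
  have a0: "a \<noteq> 0" and s0: "s \<noteq> 0" using 3 by (auto simp: a_def s_def)
  have e1: "q^(2*Suc (Suc n)) = a*s^2"
  proof -
    have "2*Suc(Suc n) = 2*n + 2*2" by simp
    then show ?thesis by (simp only: power_add power_mult a_def s_def)
  qed
  have e2: "q^(2*Suc n) = a*s" by (simp add: a_def s_def power_add[symmetric] algebra_simps)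
  have zz: "2 + z2 q = s + inverse s" using 3 by (simp add: z2_def s_def field_simps power2_eq_square)
  have "a*s^2 + inverse (a*s^2) = (s + inverse s) * (a*s + inverse (a*s)) - (a + inverse a)"
    using a0 s0 by (simp add: field_simps power2_eq_square)
  also have "\<dots> = poly (R (c (Suc (Suc n)))) (z2 q)"
  proof -
    have i1: "a*s + inverse (a*s) = poly (R (c (Suc n))) (z2 q)" using 3(1)[OF 3(3)] e2 by (simp only:)
    have i2: "a + inverse a = poly (R (c n)) (z2 q)" using 3(2)[OF 3(3)] by (simp only: a_def)
    show ?thesis unfolding c.simps R_diff R_mult R_pCons i1 i2 zz[symmetric]
      by (simp add: algebra_simps)
  qed
  finally show ?case using e1 by simp
qed

lemma c_at0: "poly (c n) 0 = 2" by (induction n rule: c.induct) simp_all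
lemma c_atm4: "poly (c n) (-4) = 2*(-1)^n" by (induction n rule: c.induct) simp_all

definition beta :: "nat \<Rightarrow> int poly" where "beta n = synthetic_div (c n) 0"

lemma c_beta: "c n = [:0,1:] * beta n + [:2:]"
  using synthetic_div_correct'[of 0 "c n"] by (simp add: beta_def c_at0)

lemma L_nat: "q \<noteq> 0 \<Longrightarrow> (q^n - inverse (q^n))^2 = z2 q * poly (R (beta n)) (z2 q)"
proof -
  assume q: "q \<noteq> 0"
  have "(q^n - inverse (q^n))^2 = q^(2*n) + inverse (q^(2*n)) - 2"
  proof -
    have e: "q^(2*n) = q^n * q^n" by (simp add: mult_2 power_add)
    have "q^n \<noteq> 0" using q by simp
    then show ?thesis unfolding e by (simp add: power2_eq_square field_simps)
  qed
  also have "\<dots> = poly (R (c n)) (z2 q) - 2" using c_eval q by simp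
  also have "\<dots> = z2 q * poly (R (beta n)) (z2 q)"
    by (subst c_beta) (simp add: R_add R_mult R_pCons)
  finally show ?thesis .
qed

lemma L_int: "q \<noteq> 0 \<Longrightarrow> (q powi m - q powi (-m))^2 = z2 q * poly (R (beta (nat \<bar>m\<bar>))) (z2 q)"
proof (cases "m \<ge> 0")
  case True
  assume q: "q \<noteq> 0"
  obtain k where m: "m = int k" using True nonneg_eq_int by blast
  show ?thesis using L_nat[OF q, of k] by (simp add: m power_int_minus)
next
  case False
  assume q: "q \<noteq> 0"
  obtain k where mk: "-m = int k" using False nonneg_eq_int[of "-m"] by force
  then have m: "m = - int k" by simp
  have "(q powi m - q powi (-m))^2 = (inverse (q^k) - q^k)^2"
    by (simp only: m power_int_minus minus_minus power_int_of_nat)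
  also have "\<dots> = (q^k - inverse (q^k))^2" by (rule power2_commute)
  finally have "(q powi m - q powi (-m))^2 = (q^k - inverse (q^k))^2" .
  then show ?thesis using L_nat[OF q, of k] by (simp add: m)
qed

lemma T: assumes q: "q \<noteq> 0" "q^2 \<noteq> 1"
  shows "(q powi (int p * m) - q powi (-(int p * m)))^2
    = (qint (int p) q)^2 * poly (R ([:0,1:] * pcompose (beta (nat \<bar>m\<bar>)) ([:0,1:] * beta p))) (z2 q)"
proof -
  define w where "w = q^p"
  have w0: "w \<noteq> 0" using q by (simp add: w_def)
  have e1: "q powi (int p * m) = w powi m" by (simp add: power_int_mult w_def)
  have e2: "q powi (-(int p * m)) = w powi (-m)" by (simp add: power_int_mult w_def flip: mult_minus_right)
  define G where "G = poly (R (beta p)) (z2 q)"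
  have zw: "z2 w = z2 q * G" unfolding G_def using L_nat[OF q(1), of p] by (simp add: z2_def w_def)
  have zq: "z2 q \<noteq> 0"
  proof
    assume "z2 q = 0"
    then have "q = inverse q" by (simp add: z2_def)
    then have "q * q = 1" using q(1) by (metis right_inverse)
    then show False using q(2) by (simp add: power2_eq_square)
  qed
  have qi: "(qint (int p) q)^2 = G"
  proof -
    have "(qint (int p) q)^2 = z2 w / z2 q"
      by (simp add: qint_def z2_def w_def power_int_minus power_divide)
    then show ?thesis using zw zq by simp
  qed
  have "(q powi (int p * m) - q powi (-(int p * m)))^2 = z2 w * poly (R (beta (nat \<bar>m\<bar>))) (z2 w)"
    unfolding e1 e2 by (rule L_int[OF w0])
  also have "\<dots> = G * (z2 q * poly (R (beta (nat \<bar>m\<bar>))) (z2 q * G))" using zw by simp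
  also have "\<dots> = (qint (int p) q)^2 * poly (R ([:0,1:] * pcompose (beta (nat \<bar>m\<bar>)) ([:0,1:] * beta p))) (z2 q)"
    by (simp add: qi R_mult R_pcompose R_pCons poly_pcompose G_def)
  finally show ?thesis .
qed

lemma P1: "(x::real) \<noteq> 0 \<Longrightarrow> (\<Sum>j<2*n+1. x powi (2*int n - 2*int j)) - real (2*n+1)
   = (\<Sum>k\<in>{1..n}. (x powi int k - x powi (-int k))^2)"
proof (induction n)
  case 0 then show ?case by simp
next
  case (Suc n)
  define a where "a = x powi (int n + 1)"
  have a0: "a \<noteq> 0" using Suc.prems by (simp add: a_def)
  have "(\<Sum>j<2*Suc n+1. x powi (2*int (Suc n) - 2*int j))
      = x powi (2*int (Suc n)) + (\<Sum>j<2*n+2. x powi (2*int (Suc n) - 2*int (Suc j)))"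
  proof -
    have e: "2*Suc n + 1 = Suc (2*n+2)" by simp
    show ?thesis unfolding e sum.lessThan_Suc_shift by simp
  qed
  also have "(\<Sum>j<2*n+2. x powi (2*int (Suc n) - 2*int (Suc j)))
     = (\<Sum>j<2*n+1. x powi (2*int n - 2*int j)) + x powi (-(2*int n + 2))"
    by (simp add: algebra_simps)
  also have "x powi (2*int (Suc n)) = a*a"
    using Suc.prems by (simp add: a_def flip: power_int_add) (simp add: algebra_simps)
  also have "x powi (-(2*int n + 2)) = inverse (a*a)"
  proof -
    have "x powi (-(2*int n + 2)) = inverse (x powi (2*int n + 2))" by (rule power_int_minus)
    also have "x powi (2*int n + 2) = a*a"
      using Suc.prems by (simp add: a_def flip: power_int_add)
    finally show ?thesis .
  qed
  finally have L: "(\<Sum>j<2*Suc n+1. x powi (2*int (Suc n) - 2*int j)) = a*a + (\<Sum>j<2*n+1. x powi (2*int n - 2*int j)) + inverse (a*a)"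
    by simp
  have r: "(x powi int (Suc n) - x powi (-int (Suc n)))^2 = a*a + inverse (a*a) - 2"
  proof -
    have "x powi int (Suc n) = a" unfolding a_def by (metis of_nat_Suc add.commute)
    moreover have "x powi (-int (Suc n)) = inverse a" unfolding a_def by (metis power_int_minus of_nat_Suc add.commute)
    ultimately show ?thesis using a0 by (simp only:) (simp add: power2_eq_square field_simps)
  qed
  have sS: "(\<Sum>k\<in>{1..Suc n}. (x powi int k - x powi (-int k))^2) = (\<Sum>k\<in>{1..n}. (x powi int k - x powi (-int k))^2) + (x powi int (Suc n) - x powi (-int (Suc n)))^2"
    by (rule sum.cl_ivl_Suc[THEN trans]) simp
  have rr: "real (2*Suc n+1) = real(2*n+1) + 2" by simp
  show ?case unfolding L sS r rr using Suc.IH[OF Suc.prems] by linarith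
qed

lemma sum2: "(\<Sum>j<2::nat. (X::real) powi (int 2 - 1 - 2 * int j)) = X + inverse X"
  by (simp add: numeral_2_eq_2 power_int_minus)

theorem lemma7p5:
  fixes p :: nat and \<tau> :: int
  assumes "prime p"
  shows "\<exists>\<alpha> :: int poly. \<forall>q :: real. q \<noteq> 0 \<and> q\<^sup>2 \<noteq> 1 \<longrightarrow>
    (\<Sum>j<p. (q powi (int p * \<tau>)) powi (int p - 1 - 2 * int j))
      - real p * (-1) powi ((int p - 1) * \<tau>)
    = (qint (int p) q)\<^sup>2 * poly (map_poly of_int \<alpha>) ((q - inverse q)\<^sup>2)"
proof (cases "p = 2")
  case False
  have "p \<ge> 2" by (rule prime_ge_2_nat[OF assms])
  then have "p > 2" using False by simp
  then have op: "odd p" by (rule prime_odd_nat[OF assms])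
  define n where "n = p div 2"
  have pn: "p = 2*n+1" unfolding n_def using odd_two_times_div_two_succ[OF op] by simp
  define \<alpha> where "\<alpha> = (\<Sum>k\<in>{1..n}. [:0,1:] * pcompose (beta (nat \<bar>\<tau> * int k\<bar>)) ([:0,1:] * beta p))"
  show ?thesis
  proof (intro exI allI impI)
    fix q :: real assume q: "q \<noteq> 0 \<and> q\<^sup>2 \<noteq> 1"
    define x where "x = q powi (int p * \<tau>)"
    have x0: "x \<noteq> 0" using q by (simp add: x_def)
    have sgn: "(-1::real) powi ((int p - 1) * \<tau>) = 1"
    proof -
      have e: "(int p - 1) * \<tau> = 2 * (int n * \<tau>)" by (simp add: pn)
      show ?thesis unfolding e power_int_mult by simp
    qed
    have s1: "(\<Sum>j<p. x powi (int p - 1 - 2 * int j)) = (\<Sum>j<2*n+1. x powi (2*int n - 2*int j))"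
      by (simp add: pn)
    have s2: "(x powi int k - x powi (-int k))^2 = (qint (int p) q)^2 * poly (R ([:0,1:] * pcompose (beta (nat \<bar>\<tau> * int k\<bar>)) ([:0,1:] * beta p))) (z2 q)" for k
    proof -
      have "x powi int k = q powi (int p * (\<tau> * int k))" by (simp add: x_def power_int_mult mult.assoc)
      moreover have "x powi (-int k) = q powi (-(int p * (\<tau> * int k)))"
        by (simp add: x_def mult.assoc flip: power_int_mult)
      ultimately show ?thesis using T[of q p "\<tau> * int k"] q by simp
    qed
    have "(\<Sum>j<p. x powi (int p - 1 - 2 * int j)) - real p * (-1) powi ((int p - 1) * \<tau>)
       = (\<Sum>k\<in>{1..n}. (x powi int k - x powi (-int k))^2)"
      using P1[OF x0, of n] by (simp only: s1 sgn pn) simp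
    also have "\<dots> = (qint (int p) q)\<^sup>2 * poly (map_poly of_int \<alpha>) ((q - inverse q)\<^sup>2)"
    proof -
      have "(\<Sum>k\<in>{1..n}. (x powi int k - x powi (-int k))^2) = (\<Sum>k\<in>{1..n}. (qint (int p) q)^2 * poly (R ([:0,1:] * pcompose (beta (nat \<bar>\<tau> * int k\<bar>)) ([:0,1:] * beta p))) (z2 q))"
        by (rule sum.cong[OF refl s2])
      also have "\<dots> = (qint (int p) q)\<^sup>2 * poly (map_poly of_int \<alpha>) (z2 q)"
        by (simp only: \<alpha>_def R_sum poly_sum sum_distrib_left)
      finally show ?thesis by (simp only: z2_def)
    qed
    finally show "(\<Sum>j<p. (q powi (int p * \<tau>)) powi (int p - 1 - 2 * int j))
      - real p * (-1) powi ((int p - 1) * \<tau>)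
    = (qint (int p) q)\<^sup>2 * poly (map_poly of_int \<alpha>) ((q - inverse q)\<^sup>2)"
      by (simp only: x_def)
  qed
next
  case p2: True
  show ?thesis
  proof (cases "even \<tau>")
    case True
    then obtain s where ts: "\<tau> = 2*s" by blast
    show ?thesis
    proof (intro exI allI impI)
      fix q :: real assume q: "q \<noteq> 0 \<and> q\<^sup>2 \<noteq> 1"
      define y where "y = q powi (2*s)"
      have y0: "y \<noteq> 0" using q by (simp add: y_def)
      have x: "q powi (int p * \<tau>) = y*y" using q
        by (simp add: y_def p2 ts flip: power_int_add)
      have sgn: "(-1::real) powi ((int p - 1) * \<tau>) = 1" by (simp add: p2 ts power_int_mult)
      have "(\<Sum>j<p. (q powi (int p * \<tau>)) powi (int p - 1 - 2 * int j))
      - real p * (-1) powi ((int p - 1) * \<tau>) = (y - inverse y)^2"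
        unfolding sgn x unfolding p2 sum2 using y0 by (simp add: power2_eq_square field_simps)
      also have "\<dots> = (q powi (int p * s) - q powi (-(int p * s)))^2"
        by (simp add: y_def p2 power_int_minus)
      also have "\<dots> = (qint (int p) q)\<^sup>2 * poly (map_poly of_int ([:0,1:] * pcompose (beta (nat \<bar>s\<bar>)) ([:0,1:] * beta p))) ((q - inverse q)\<^sup>2)"
        using T[of q p s] q by (simp add: z2_def)
      finally show "(\<Sum>j<p. (q powi (int p * \<tau>)) powi (int p - 1 - 2 * int j))
      - real p * (-1) powi ((int p - 1) * \<tau>) = (qint (int p) q)\<^sup>2 * poly (map_poly of_int ([:0,1:] * pcompose (beta (nat \<bar>s\<bar>)) ([:0,1:] * beta p))) ((q - inverse q)\<^sup>2)" .
    qed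
  next
    case False
    define k where "k = nat \<bar>\<tau>\<bar>"
    have ok: "odd k" using False by (simp add: k_def even_nat_iff)
    define \<delta> where "\<delta> = synthetic_div (c k + [:2:]) (-4)"
    have cd: "c k + [:2:] = [:4,1:] * \<delta>"
      using synthetic_div_correct'[of "-4" "c k + [:2:]"] ok by (simp add: \<delta>_def c_atm4)
    show ?thesis
    proof (intro exI allI impI)
      fix q :: real assume q: "q \<noteq> 0 \<and> q\<^sup>2 \<noteq> 1"
      define y where "y = q powi \<tau>"
      have y0: "y \<noteq> 0" using q by (simp add: y_def)
      have x: "q powi (int p * \<tau>) = y*y" using q
        by (simp add: y_def p2 flip: power_int_add)
      have sgn: "(-1::real) powi ((int p - 1) * \<tau>) = -1"
      proof -
        obtain s where ts: "\<tau> = 2*s + 1" using False oddE by blast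
        have "(-1::real) powi (2*s + 1) = (-1) powi (2*s) * (-1) powi 1" by (rule power_int_add) simp
        also have "\<dots> = -1" unfolding power_int_mult by simp
        finally show ?thesis by (simp add: p2 ts)
      qed
      have yk: "(y + inverse y)^2 = (q^k + inverse (q^k))^2"
      proof (cases "\<tau> \<ge> 0")
        case True
        then have "\<tau> = int k" by (simp add: k_def)
        then show ?thesis by (simp add: y_def)
      next
        case False
        then have "\<tau> = - int k" by (simp add: k_def)
        then show ?thesis by (simp add: y_def power_int_minus add.commute)
      qed
      have "(\<Sum>j<p. (q powi (int p * \<tau>)) powi (int p - 1 - 2 * int j))
      - real p * (-1) powi ((int p - 1) * \<tau>) = (y + inverse y)^2"
        unfolding sgn x unfolding p2 sum2 using y0 by (simp add: power2_eq_square field_simps)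
      also have "\<dots> = q^(2*k) + inverse (q^(2*k)) + 2"
      proof -
        have e: "q^(2*k) = q^k * q^k" by (simp add: mult_2 power_add)
        have "q^k \<noteq> 0" using q by simp
        then show ?thesis unfolding yk e by (simp add: power2_eq_square field_simps)
      qed
      also have "\<dots> = poly (R (c k + [:2:])) (z2 q)" using c_eval[of q k] q by (simp add: R_add R_pCons)
      also have "\<dots> = (z2 q + 4) * poly (R \<delta>) (z2 q)" unfolding cd R_mult R_pCons by (simp add: algebra_simps)
      also have "z2 q + 4 = (qint (int p) q)\<^sup>2"
      proof -
        have qq: "q - inverse q \<noteq> 0"
        proof
          assume "q - inverse q = 0"
          then have "q * q = 1" using q by (metis eq_iff_diff_eq_0 right_inverse)
          then show False using q by (simp add: power2_eq_square)
        qed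
        have "qint (int p) q = q + inverse q"
          using qq q by (simp add: qint_def p2 power_int_minus field_simps power2_eq_square)
        then show ?thesis using q by (simp only:) (simp add: z2_def power2_eq_square field_simps)
      qed
      finally show "(\<Sum>j<p. (q powi (int p * \<tau>)) powi (int p - 1 - 2 * int j))
      - real p * (-1) powi ((int p - 1) * \<tau>) = (qint (int p) q)\<^sup>2 * poly (map_poly of_int \<delta>) ((q - inverse q)\<^sup>2)"
        by (simp add: z2_def)
    qed
  qed
qed

end
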